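(* Let $\Bbbk$ be a field of characteristic $\neq 2$ and let $A_1,\dots,A_m\in\Bbbk^{n\times n}$ be symmetric matrices. Then there do not exist $P\in\mathrm{GL}_n(\Bbbk)$, an integer $t\ge 2$ and positive integers $n_1,\dots,n_t$ with $\sum_j n_j=n$ such that every $P^TA_iP$ ($1\le i\le m$) is block diagonal with diagonal blocks of sizes $n_1,\dots,n_t$, if and only if the only matrices $X\in Z(A_1,\dots,A_m)$ with $X^2=X$ are $X=0$ and $X=I_n$.
   Context: The center of symmetric matrices $A_1,\dots,A_m\in\Bbbk^{n\times n}$ is $Z(A_1,\dots,A_m)=\{X\in\Bbbk^{n\times n} : (A_iX)^T=A_iX \text{ for all } 1\le i\le m\}$. *)

theory Defs
  imports "Jordan_Normal_Form.Matrix"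
begin

definition sym_mat :: "nat \<Rightarrow> 'a mat \<Rightarrow> bool" where
  "sym_mat n A \<longleftrightarrow> A \<in> carrier_mat n n \<and> transpose_mat A = A"

definition blk_start :: "nat list \<Rightarrow> nat \<Rightarrow> nat" where
  "blk_start ns b = sum_list (take b ns)"

definition block_diag_sizes :: "nat list \<Rightarrow> 'a::zero mat \<Rightarrow> bool" where
  "block_diag_sizes ns M \<longleftrightarrow>
     (\<forall>i < dim_row M. \<forall>j < dim_col M.
        (\<not> (\<exists>b < length ns. blk_start ns b \<le> i \<and> i < blk_start ns (Suc b)
                          \<and> blk_start ns b \<le> j \<and> j < blk_start ns (Suc b)))
        \<longrightarrow> M $$ (i, j) = 0)"

definition center :: "nat \<Rightarrow> nat \<Rightarrow> (nat \<Rightarrow> 'a::comm_ring_1 mat) \<Rightarrow> 'a mat set" where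
  "center n m A = {X \<in> carrier_mat n n. \<forall>i \<in> {1..m}. transpose_mat (A i * X) = A i * X}"

end

theory Submission
  imports Defs "Jordan_Normal_Form.DL_Rank"
begin


lemma (in vec_space) idem_basis:
  fixes X :: "'a mat"
  assumes X: "X \<in> carrier_mat n n" and XX: "X * X = X"
  shows "\<exists>B. B \<subseteq> carrier_vec n \<and> finite B \<and> basis B \<and> (\<forall>b\<in>B. X *\<^sub>v b = b \<or> X *\<^sub>v b = 0\<^sub>v n)"
proof -
  define S where "S = set (cols X) \<union> set (map (\<lambda>j. unit_vec n j - col X j) [0..<n])"
  have Sc: "S \<subseteq> carrier_vec n" using X unfolding S_def by (auto simp: cols_def)
  have Sf: "finite S" unfolding S_def by simp
  have Sprop: "\<forall>b\<in>S. X *\<^sub>v b = b \<or> X *\<^sub>v b = 0\<^sub>v n"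
  proof
    fix b assume "b \<in> S"
    then consider j where "j < n" "b = col X j" | j where "j < n" "b = unit_vec n j - col X j"
      using X unfolding S_def cols_def by auto
    then show "X *\<^sub>v b = b \<or> X *\<^sub>v b = 0\<^sub>v n"
    proof cases
      case 1
      have "X *\<^sub>v col X j = col (X * X) j" using X 1 by simp
      then show ?thesis using 1 XX by simp
    next
      case 2
      have "X *\<^sub>v b = X *\<^sub>v unit_vec n j - X *\<^sub>v col X j"
        using 2 X by (simp add: mult_minus_distrib_mat_vec)
      also have "X *\<^sub>v unit_vec n j = col X j" using col_mult2[OF X one_carrier_mat, of j] X 2 by simp
      also have "X *\<^sub>v col X j = col X j" using X 2 XX col_mult2[OF X X, of j, symmetric] by simp
      finally show ?thesis using X 2 by simp
    qed
  qed
  have gen: "span S = carrier_vec n"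
  proof
    show "span S \<subseteq> carrier_vec n" using Sc span_closed by auto
    have "set (unit_vecs n) \<subseteq> span S"
    proof
      fix u :: "'a vec" assume "u \<in> set (unit_vecs n)"
      then obtain j where j: "j < n" "u = unit_vec n j" unfolding unit_vecs_def by auto
      have a: "col X j \<in> span S" using j X Sc unfolding S_def by (intro in_own_span[THEN subsetD]) (auto simp: cols_def)
      have b: "unit_vec n j - col X j \<in> span S" using j X Sc unfolding S_def by (intro in_own_span[THEN subsetD]) auto
      have "col X j + (unit_vec n j - col X j) \<in> span S" using span_add1[OF _ a b] Sc by simp
      moreover have "col X j + (unit_vec n j - col X j) = u" using j X by auto
      ultimately show "u \<in> span S" by simp
    qed
    then have "span (set (unit_vecs n)) \<subseteq> span S" using span_subsetI[OF Sc] by auto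
    then show "carrier_vec n \<subseteq> span S" using span_unit_vecs_is_carrier by simp
  qed
  obtain B where B: "B \<subseteq> S" "minimal B (\<lambda>T. T \<subseteq> carrier_vec n \<and> span T = carrier_vec n)"
    using minimal_exists[OF Sf, of "\<lambda>T. T \<subseteq> carrier_vec n \<and> span T = carrier_vec n"] Sc gen by auto
  have "basis B" using min_gen_is_basis[OF B(2)] .
  then show ?thesis using B(1) Sc Sf Sprop by (intro exI[of _ B]) (auto intro: finite_subset)
qed

lemma (in vec_space) idem_P:
  fixes X :: "'a mat"
  assumes X: "X \<in> carrier_mat n n" and XX: "X * X = X"
  shows "\<exists>L1 L2. set (L1 @ L2) \<subseteq> carrier_vec n \<and> length (L1 @ L2) = n \<and> distinct (L1 @ L2) \<and>
     (\<forall>c\<in>set L1. X *\<^sub>v c = c) \<and> (\<forall>c\<in>set L2. X *\<^sub>v c = 0\<^sub>v n) \<and> det (mat_of_cols n (L1 @ L2)) \<noteq> 0"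
proof -
  obtain B where B: "B \<subseteq> carrier_vec n" "finite B" "basis B" "\<forall>b\<in>B. X *\<^sub>v b = b \<or> X *\<^sub>v b = 0\<^sub>v n"
    using idem_basis[OF X XX] by blast
  obtain L1 where L1: "set L1 = {b\<in>B. X *\<^sub>v b = b}" "distinct L1"
    using finite_distinct_list[of "{b\<in>B. X *\<^sub>v b = b}"] B(2) by auto
  obtain L2 where L2: "set L2 = {b\<in>B. X *\<^sub>v b \<noteq> b}" "distinct L2"
    using finite_distinct_list[of "{b\<in>B. X *\<^sub>v b \<noteq> b}"] B(2) by auto
  let ?L = "L1 @ L2"
  have setL: "set ?L = B" using L1 L2 by auto
  have dL: "distinct ?L" using L1 L2 by auto
  have lenL: "length ?L = n"
    using distinct_card[OF dL] setL dim_basis[OF B(2) B(3)] dim_is_n by simp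
  let ?P = "mat_of_cols n ?L"
  have Pc: "?P \<in> carrier_mat n n" using lenL by (metis mat_of_cols_carrier(1))
  have colsP: "cols ?P = ?L" using setL B(1) by simp
  have det: "det ?P \<noteq> 0"
  proof
    assume "det ?P = 0"
    then obtain v where v: "v \<in> carrier_vec n" "v \<noteq> 0\<^sub>v n" "?P *\<^sub>v v = 0\<^sub>v n"
      using det_0_iff_vec_prod_zero_field[OF Pc] by blast
    have "lin_dep (set (cols ?P))" using lin_depI[OF Pc v] colsP dL by simp
    then show False using B(3) colsP setL unfolding basis_def by simp
  qed
  show ?thesis
    apply (rule exI[of _ L1], rule exI[of _ L2])
    using setL B lenL dL det L1 L2 by auto
qed



lemma sum_take_mono: "j \<le> k \<Longrightarrow> sum_list (take j (xs::nat list)) \<le> sum_list (take k xs)"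
proof -
  assume "j \<le> k"
  then obtain d where "k = j + d" using le_Suc_ex by blast
  then show ?thesis by (simp add: take_add)
qed

lemma blk_first:
  assumes ns: "ns \<noteq> []" and a: "a < hd ns" and b: "hd ns \<le> b"
    and bd: "block_diag_sizes ns M" and M: "M \<in> carrier_mat n n" and bn: "b < n"
  shows "M $$ (a,b) = 0 \<and> M $$ (b,a) = 0"
proof -
  have s1: "blk_start ns (Suc 0) = hd ns" using ns unfolding blk_start_def by (cases ns) auto
  have nob: "\<not> (\<exists>k < length ns. blk_start ns k \<le> x \<and> x < blk_start ns (Suc k)
                          \<and> blk_start ns k \<le> y \<and> y < blk_start ns (Suc k))"
    if "x < hd ns" "hd ns \<le> y" for x y
  proof
    assume "\<exists>k < length ns. blk_start ns k \<le> x \<and> x < blk_start ns (Suc k)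
                          \<and> blk_start ns k \<le> y \<and> y < blk_start ns (Suc k)"
    then obtain k where k: "blk_start ns k \<le> x" "y < blk_start ns (Suc k)" by blast
    show False
    proof (cases k)
      case 0 then show ?thesis using k that s1 by simp
    next
      case (Suc k')
      then have "blk_start ns (Suc 0) \<le> blk_start ns k" unfolding blk_start_def by (intro sum_take_mono) simp
      then show ?thesis using k that s1 by simp
    qed
  qed
  have nob2: "\<not> (\<exists>k < length ns. blk_start ns k \<le> x \<and> x < blk_start ns (Suc k)
                          \<and> blk_start ns k \<le> y \<and> y < blk_start ns (Suc k))"
    if "y < hd ns" "hd ns \<le> x" for x y
    using nob[OF that] by blast
  have an: "a < n" using a b bn by simp
  show ?thesis using bd M an bn nob[OF a b] nob2[OF a b] unfolding block_diag_sizes_def by auto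
qed

lemma sum_delta_E: "b < (n::nat) \<Longrightarrow> (\<Sum>k = 0..<n. f k * (if k = b \<and> k < n1 then 1 else 0)) = (if b < n1 then f b else (0::'a::comm_ring_1))"
proof -
  assume b: "b < n"
  have "(\<Sum>k = 0..<n. f k * (if k = b \<and> k < n1 then 1 else 0)) = (\<Sum>k = 0..<n. if k = b then (if b < n1 then f b else 0) else 0)"
    by (rule sum.cong) auto
  also have "\<dots> = (if b < n1 then f b else 0)" using b by simp
  finally show ?thesis .
qed

lemma sum_delta_E2: "a < (n::nat) \<Longrightarrow> (\<Sum>k = 0..<n. (if a = k \<and> a < n1 then 1 else 0) * f k) = (if a < n1 then f a else (0::'a::comm_ring_1))"
proof -
  assume a: "a < n"
  have "(\<Sum>k = 0..<n. (if a = k \<and> a < n1 then 1 else 0) * f k) = (\<Sum>k = 0..<n. if k = a then (if a < n1 then f a else 0) else 0)"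
    by (rule sum.cong) auto
  also have "\<dots> = (if a < n1 then f a else 0)" using a by simp
  finally show ?thesis .
qed

lemma mult_E:
  fixes D :: "'a::comm_ring_1 mat"
  assumes D: "D \<in> carrier_mat n n" and a: "a < n" and b: "b < n"
    and E: "E = mat n n (\<lambda>(i,j). if i = j \<and> i < n1 then 1 else 0)"
  shows "(D * E) $$ (a,b) = (if b < n1 then D $$ (a,b) else 0)"
    and "(E * D) $$ (a,b) = (if a < n1 then D $$ (a,b) else 0)"
proof -
  have "(D * E) $$ (a,b) = row D a \<bullet> col E b" using D a b E by simp
  also have "\<dots> = (\<Sum>k = 0..<n. row D a $ k * col E b $ k)" using E by (simp add: scalar_prod_def)
  also have "\<dots> = (\<Sum>k = 0..<n. D $$ (a,k) * (if k = b \<and> k < n1 then 1 else 0))"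
    by (rule sum.cong) (use D a b E in auto)
  also have "\<dots> = (if b < n1 then D $$ (a,b) else 0)"
    by (rule sum_delta_E[OF b])
  finally show "(D * E) $$ (a,b) = (if b < n1 then D $$ (a,b) else 0)" .
  have "(E * D) $$ (a,b) = row E a \<bullet> col D b" using D a b E by simp
  also have "\<dots> = (\<Sum>k = 0..<n. row E a $ k * col D b $ k)" using D by (simp add: scalar_prod_def)
  also have "\<dots> = (\<Sum>k = 0..<n. (if a = k \<and> a < n1 then 1 else 0) * D $$ (k,b))"
    by (rule sum.cong) (use D a b E in auto)
  also have "\<dots> = (if a < n1 then D $$ (a,b) else 0)"
    by (rule sum_delta_E2[OF a])
  finally show "(E * D) $$ (a,b) = (if a < n1 then D $$ (a,b) else 0)" .
qed

lemma dir2: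
  fixes A :: "nat \<Rightarrow> 'a::field mat"
  assumes sym: "\<forall>i \<in> {1..m}. sym_mat n (A i)"
    and P: "P \<in> carrier_mat n n" and invP: "invertible_mat P" and len: "length ns \<ge> 2"
    and pos: "\<forall>k \<in> set ns. k > 0" and sum: "sum_list ns = n"
    and bd: "\<forall>i \<in> {1..m}. block_diag_sizes ns (transpose_mat P * A i * P)"
  shows "\<exists>X \<in> center n m A. X * X = X \<and> X \<noteq> 0\<^sub>m n n \<and> X \<noteq> 1\<^sub>m n"
proof -
  obtain B where PB: "P * B = 1\<^sub>m n" and BP: "B * P = 1\<^sub>m (dim_row B)"
    using invP P unfolding invertible_mat_def inverts_mat_def by auto
  have Bc: "B \<in> carrier_mat n n"
  proof -
    have "dim_col B = n" using PB by (metis index_one_mat(3) index_mult_mat(3))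
    moreover have "dim_row B = n" using BP P by (metis index_one_mat(3) index_mult_mat(3) carrier_matD(2))
    ultimately show ?thesis by auto
  qed
  then have BP: "B * P = 1\<^sub>m n" using BP by simp
  obtain n1 ns' where ns: "ns = n1 # ns'" using len by (cases ns) auto
  have n1pos: "n1 > 0" using pos ns by simp
  obtain n2 ns'' where ns': "ns' = n2 # ns''" using len ns by (cases ns') auto
  have n1n: "n1 < n" using sum ns ns' pos by auto
  define E :: "'a mat" where "E = mat n n (\<lambda>(i,j). if i = j \<and> i < n1 then 1 else 0)"
  have Ec: "E \<in> carrier_mat n n" unfolding E_def by simp
  have EE: "E * E = E"
    by (rule eq_matI) (use Ec mult_E(1)[OF Ec _ _ E_def] in \<open>auto simp: E_def\<close>)
  have DE: "D * E = E * D" if D: "D \<in> carrier_mat n n" and bdD: "block_diag_sizes ns D" for D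
  proof (rule eq_matI)
    fix a b assume ab: "a < dim_row (E * D)" "b < dim_col (E * D)"
    then have a: "a < n" and b: "b < n" using D Ec by auto
    have l: "(D * E) $$ (a,b) = (if b < n1 then D $$ (a,b) else 0)"
      using mult_E(1)[OF D a b E_def] .
    have r: "(E * D) $$ (a,b) = (if a < n1 then D $$ (a,b) else 0)"
      using mult_E(2)[OF D a b E_def] .
    show "(D * E) $$ (a,b) = (E * D) $$ (a,b)"
      using blk_first[of ns a b D n] blk_first[of ns b a D n] a b D bdD ns unfolding l r by auto
  qed (use D Ec in auto)
  define X where "X = P * E * B"
  have Xc: "X \<in> carrier_mat n n" using P Ec Bc unfolding X_def by simp
  have XX: "X * X = X"
  proof -
    have "X * X = P * (E * (B * P) * E) * B" unfolding X_def using P Ec Bc by (simp add: assoc_mult_mat[of _ n n _ n _ n])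
    also have "\<dots> = X" unfolding X_def BP using P Ec Bc EE by simp
    finally show ?thesis .
  qed
  have X0: "X \<noteq> 0\<^sub>m n n"
  proof
    assume "X = 0\<^sub>m n n"
    then have "B * X * P = 0\<^sub>m n n" using Bc P by simp
    moreover have "B * X * P = E" unfolding X_def using P Ec Bc BP by (simp add: assoc_mult_mat[of _ n n _ n _ n] flip: assoc_mult_mat[of B n n P n])
    ultimately have "E $$ (0,0) = 0" using n1n by simp
    then show False using n1pos n1n by (simp add: E_def)
  qed
  have X1: "X \<noteq> 1\<^sub>m n"
  proof
    assume "X = 1\<^sub>m n"
    then have "B * X * P = 1\<^sub>m n" using Bc P BP by simp
    moreover have "B * X * P = E" unfolding X_def using P Ec Bc BP by (simp add: assoc_mult_mat[of _ n n _ n _ n] flip: assoc_mult_mat[of B n n P n])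
    ultimately have "E $$ (n1,n1) = 1" using n1n by simp
    then show False using n1n by (simp add: E_def)
  qed
  have cen: "X \<in> center n m A"
    unfolding center_def
  proof (intro CollectI conjI ballI Xc)
    fix i assume i: "i \<in> {1..m}"
    have Ai: "A i \<in> carrier_mat n n" "transpose_mat (A i) = A i" using sym i unfolding sym_mat_def by auto
    define D where "D = transpose_mat P * A i * P"
    have Dc: "D \<in> carrier_mat n n" using P Ai unfolding D_def by simp
    have Dt: "transpose_mat D = D" unfolding D_def using P Ai
      by (simp add: transpose_mult[of _ n n _ n])
    have DE': "D * E = E * D" using DE[OF Dc] bd i unfolding D_def by auto
    have eq: "A i * X = transpose_mat B * (D * E) * B"
    proof -
      have "transpose_mat B * (D * E) * B = transpose_mat (P * B) * A i * (P * (E * B))"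
        unfolding D_def using P Ai Bc Ec by (simp add: transpose_mult[of _ n n _ n] assoc_mult_mat[of _ n n _ n _ n])
      also have "\<dots> = A i * X" unfolding PB X_def using P Ai Bc Ec by (simp add: assoc_mult_mat[of _ n n _ n _ n])
      finally show ?thesis by simp
    qed
    have Et: "transpose_mat E = E" unfolding E_def by (rule eq_matI) auto
    have DEc: "D * E \<in> carrier_mat n n" using Dc Ec by simp
    have DEt: "transpose_mat (D * E) = D * E" using transpose_mult[OF Dc Ec] Et Dt DE' by simp
    have Btc: "transpose_mat B \<in> carrier_mat n n" using Bc by simp
    have "transpose_mat (transpose_mat B * (D * E) * B) = transpose_mat B * transpose_mat (transpose_mat B * (D * E))"
      by (rule transpose_mult[of "transpose_mat B * (D * E)" n n B n]) (use Bc Btc DEc in auto)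
    also have "transpose_mat (transpose_mat B * (D * E)) = transpose_mat (D * E) * B"
      using transpose_mult[OF Btc DEc] by simp
    also have "transpose_mat B * (transpose_mat (D * E) * B) = transpose_mat B * (D * E) * B"
      unfolding DEt using Btc DEc Bc by simp
    finally show "transpose_mat (A i * X) = A i * X" unfolding eq .
  qed
  show ?thesis using cen XX X0 X1 by blast
qed



lemma dir1:
  fixes A :: "nat \<Rightarrow> 'a::field mat"
  assumes sym: "\<forall>i \<in> {1..m}. sym_mat n (A i)"
    and Xcen: "X \<in> center n m A" and XX: "X * X = X" and X0: "X \<noteq> 0\<^sub>m n n" and X1: "X \<noteq> 1\<^sub>m n"
  shows "\<exists>P ns. P \<in> carrier_mat n n \<and> invertible_mat P \<and>
               length ns \<ge> 2 \<and> (\<forall>k \<in> set ns. k > 0) \<and> sum_list ns = n \<and>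
               (\<forall>i \<in> {1..m}. block_diag_sizes ns (transpose_mat P * A i * P))"
proof -
  interpret vec_space "TYPE('a)" n .
  have Xc: "X \<in> carrier_mat n n" using Xcen unfolding center_def by auto
  obtain L1 L2 where L: "set (L1 @ L2) \<subseteq> carrier_vec n" "length (L1 @ L2) = n" "distinct (L1 @ L2)"
     "\<forall>c\<in>set L1. X *\<^sub>v c = c" "\<forall>c\<in>set L2. X *\<^sub>v c = 0\<^sub>v n" "det (mat_of_cols n (L1 @ L2)) \<noteq> 0"
    using idem_P[OF Xc XX] by blast
  define P where "P = mat_of_cols n (L1 @ L2)"
  have Pc: "P \<in> carrier_mat n n" unfolding P_def using mat_of_cols_carrier(1)[of n "L1 @ L2"] L(2) by simp
  have dP: "det P \<noteq> 0" using L(6) P_def by simp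
  have "P \<in> Units (ring_mat TYPE('a) n ())" using det_non_zero_imp_unit[OF Pc dP, of "()"] .
  then obtain Q where Qc: "Q \<in> carrier_mat n n" and PQ: "P * Q = 1\<^sub>m n" and QP: "Q * P = 1\<^sub>m n"
    unfolding Units_def ring_mat_simps by auto
  have invP: "invertible_mat P" unfolding invertible_mat_def inverts_mat_def
    using Pc Qc PQ QP by auto
  have colP: "col P j = (L1 @ L2) ! j" if "j < n" for j
  proof -
    have "(L1 @ L2) ! j \<in> set (L1 @ L2)" using that L(2) by (intro nth_mem) simp
    then show ?thesis unfolding P_def using that L(1,2) by (intro col_mat_of_cols) auto
  qed
  have L1ne: "L1 \<noteq> []"
  proof
    assume "L1 = []"
    have "X * P = 0\<^sub>m n n"
    proof (rule mat_col_eqI)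
      fix j assume "j < dim_col (0\<^sub>m n n :: 'a mat)"
      then have j: "j < n" by simp
      have "col (X * P) j = X *\<^sub>v col P j" using Xc Pc j by simp
      also have "\<dots> = 0\<^sub>v n" using colP[OF j] L(2,5) j \<open>L1 = []\<close> by simp
      finally show "col (X * P) j = col (0\<^sub>m n n) j" using j by simp
    qed (use Xc Pc in auto)
    then have "X * P * Q = 0\<^sub>m n n" using Qc by simp
    moreover have "X * P * Q = X" using Xc Pc Qc PQ by simp
    ultimately show False using X0 by simp
  qed
  have L2ne: "L2 \<noteq> []"
  proof
    assume "L2 = []"
    have "X * P = P"
    proof (rule mat_col_eqI)
      fix j assume "j < dim_col P"
      then have j: "j < n" using Pc by simp
      have "col (X * P) j = X *\<^sub>v col P j" using Xc Pc j by simp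
      also have "\<dots> = col P j" using colP[OF j] L(2,4) j \<open>L2 = []\<close> by simp
      finally show "col (X * P) j = col P j" .
    qed (use Xc Pc in auto)
    then have "X * P * Q = 1\<^sub>m n" using PQ by simp
    moreover have "X * P * Q = X" using Xc Pc Qc PQ by simp
    ultimately show False using X1 by simp
  qed
  define r where "r = length L1"
  define ns where "ns = [r, length L2]"
  have key: "u \<bullet> (A i *\<^sub>v w) = 0 \<and> w \<bullet> (A i *\<^sub>v u) = 0"
    if u: "u \<in> set L1" and w: "w \<in> set L2" and i: "i \<in> {1..m}" for u w i
  proof -
    have Ai: "A i \<in> carrier_mat n n" "transpose_mat (A i) = A i" using sym i unfolding sym_mat_def by auto
    have AX: "transpose_mat (A i * X) = A i * X" using Xcen i unfolding center_def by auto
    have XtA: "transpose_mat X * A i = A i * X"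
      using transpose_mult[OF Ai(1) Xc] Ai(2) AX by simp
    have uc: "u \<in> carrier_vec n" and wc: "w \<in> carrier_vec n" using u w L(1) by auto
    have Xu: "X *\<^sub>v u = u" and Xw: "X *\<^sub>v w = 0\<^sub>v n" using u w L(4,5) by auto
    have Xtc: "transpose_mat X \<in> carrier_mat n n" using Xc by simp
    have Awc: "A i *\<^sub>v w \<in> carrier_vec n" and Auc: "A i *\<^sub>v u \<in> carrier_vec n" using Ai uc wc by auto
    have "u \<bullet> (A i *\<^sub>v w) = (X *\<^sub>v u) \<bullet> (A i *\<^sub>v w)" using Xu by simp
    also have "\<dots> = (transpose_mat (transpose_mat X) *\<^sub>v u) \<bullet> (A i *\<^sub>v w)" by simp
    also have "\<dots> = u \<bullet> (transpose_mat X *\<^sub>v (A i *\<^sub>v w))"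
      by (rule transpose_vec_mult_scalar[OF Xtc Awc uc])
    also have "transpose_mat X *\<^sub>v (A i *\<^sub>v w) = (transpose_mat X * A i) *\<^sub>v w" using Xtc Ai wc by simp
    also have "\<dots> = A i *\<^sub>v (X *\<^sub>v w)" unfolding XtA using Ai Xc wc by simp
    also have "\<dots> = 0\<^sub>v n" unfolding Xw by (intro eq_vecI) (use Ai in auto)
    finally have 1: "u \<bullet> (A i *\<^sub>v w) = 0" using uc by simp
    have "w \<bullet> (A i *\<^sub>v u) = w \<bullet> ((A i * X) *\<^sub>v u)" using Ai Xc uc Xu by simp
    also have "\<dots> = w \<bullet> (transpose_mat X *\<^sub>v (A i *\<^sub>v u))" unfolding XtA[symmetric] using Xtc Ai uc by simp
    also have "\<dots> = (transpose_mat X *\<^sub>v (A i *\<^sub>v u)) \<bullet> w"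
      by (rule comm_scalar_prod[OF wc]) (use Xtc Auc in auto)
    also have "\<dots> = (A i *\<^sub>v u) \<bullet> (X *\<^sub>v w)" by (rule transpose_vec_mult_scalar[OF Xc wc Auc])
    also have "\<dots> = 0" unfolding Xw using Auc by simp
    finally show ?thesis using 1 by simp
  qed
  have entry: "(transpose_mat P * A i * P) $$ (a,b) = col P a \<bullet> (A i *\<^sub>v col P b)"
    if a: "a < n" and b: "b < n" and Ai: "A i \<in> carrier_mat n n" for a b i
  proof -
    have "transpose_mat P * A i * P = transpose_mat P * (A i * P)" using Pc Ai by simp
    then show ?thesis using a b Pc Ai by simp
  qed
  have bd: "block_diag_sizes ns (transpose_mat P * A i * P)" if i: "i \<in> {1..m}" for i
    unfolding block_diag_sizes_def
  proof (intro allI impI)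
    fix a b
    have Ai: "A i \<in> carrier_mat n n" using sym i unfolding sym_mat_def by auto
    assume a: "a < dim_row (transpose_mat P * A i * P)" and b: "b < dim_col (transpose_mat P * A i * P)"
    then have a: "a < n" and b: "b < n" using Pc Ai by auto
    have rn: "r + length L2 = n" using L(2) r_def by simp
    have bs: "blk_start ns 0 = 0" "blk_start ns (Suc 0) = r" "blk_start ns (Suc (Suc 0)) = n"
      unfolding blk_start_def ns_def using rn by auto
    assume nb: "\<not> (\<exists>k < length ns. blk_start ns k \<le> a \<and> a < blk_start ns (Suc k)
                          \<and> blk_start ns k \<le> b \<and> b < blk_start ns (Suc k))"
    have l2: "0 < length ns" "Suc 0 < length ns" by (simp_all add: ns_def)
    have n0: "\<not> (blk_start ns 0 \<le> a \<and> a < blk_start ns (Suc 0) \<and> blk_start ns 0 \<le> b \<and> b < blk_start ns (Suc 0))"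
      using nb l2(1) by blast
    have n1: "\<not> (blk_start ns (Suc 0) \<le> a \<and> a < blk_start ns (Suc (Suc 0)) \<and> blk_start ns (Suc 0) \<le> b \<and> b < blk_start ns (Suc (Suc 0)))"
      using nb l2(2) by blast
    have "\<not> (a < r \<and> b < r)" using n0 unfolding bs by simp
    moreover have "\<not> (r \<le> a \<and> r \<le> b)" using n1 a b unfolding bs by simp
    ultimately consider "a < r" "r \<le> b" | "r \<le> a" "b < r" by linarith
    then show "(transpose_mat P * A i * P) $$ (a, b) = 0"
    proof cases
      case 1
      have "col P a \<in> set L1" using colP[OF a] 1 r_def by (simp add: nth_append)
      moreover have "col P b \<in> set L2" using colP[OF b] 1 r_def rn b by (simp add: nth_append)
      ultimately show ?thesis using entry[OF a b Ai] key i by simp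
    next
      case 2
      have "col P b \<in> set L1" using colP[OF b] 2 r_def by (simp add: nth_append)
      moreover have "col P a \<in> set L2" using colP[OF a] 2 r_def rn a by (simp add: nth_append)
      ultimately show ?thesis using entry[OF a b Ai] key i by simp
    qed
  qed
  show ?thesis
    apply (rule exI[of _ P], rule exI[of _ ns])
    using Pc invP bd L(2) L1ne L2ne unfolding ns_def r_def by auto
qed


theorem mainTheorem2:
  fixes A :: "nat \<Rightarrow> 'a::field mat" and n m :: nat
  assumes char: "(2::'a) \<noteq> 0"
    and sym: "\<forall>i \<in> {1..m}. sym_mat n (A i)"
  shows "(\<not> (\<exists>P ns. P \<in> carrier_mat n n \<and> invertible_mat P \<and>
               length ns \<ge> 2 \<and> (\<forall>k \<in> set ns. k > 0) \<and> sum_list ns = n \<and>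
               (\<forall>i \<in> {1..m}. block_diag_sizes ns (transpose_mat P * A i * P))))
     \<longleftrightarrow> (\<forall>X \<in> center n m A. X * X = X \<longrightarrow> X = 0\<^sub>m n n \<or> X = 1\<^sub>m n)"
proof
  assume L: "\<not> (\<exists>P ns. P \<in> carrier_mat n n \<and> invertible_mat P \<and>
               length ns \<ge> 2 \<and> (\<forall>k \<in> set ns. k > 0) \<and> sum_list ns = n \<and>
               (\<forall>i \<in> {1..m}. block_diag_sizes ns (transpose_mat P * A i * P)))"
  show "\<forall>X \<in> center n m A. X * X = X \<longrightarrow> X = 0\<^sub>m n n \<or> X = 1\<^sub>m n"
  proof (intro ballI impI)
    fix X assume "X \<in> center n m A" "X * X = X"
    then show "X = 0\<^sub>m n n \<or> X = 1\<^sub>m n" using dir1[OF sym, of X] L by blast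
  qed
next
  assume R: "\<forall>X \<in> center n m A. X * X = X \<longrightarrow> X = 0\<^sub>m n n \<or> X = 1\<^sub>m n"
  show "\<not> (\<exists>P ns. P \<in> carrier_mat n n \<and> invertible_mat P \<and>
               length ns \<ge> 2 \<and> (\<forall>k \<in> set ns. k > 0) \<and> sum_list ns = n \<and>
               (\<forall>i \<in> {1..m}. block_diag_sizes ns (transpose_mat P * A i * P)))"
  proof
    assume "\<exists>P ns. P \<in> carrier_mat n n \<and> invertible_mat P \<and>
               length ns \<ge> 2 \<and> (\<forall>k \<in> set ns. k > 0) \<and> sum_list ns = n \<and>
               (\<forall>i \<in> {1..m}. block_diag_sizes ns (transpose_mat P * A i * P))"
    then obtain P ns where H: "P \<in> carrier_mat n n" "invertible_mat P" "length ns \<ge> 2"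
      "\<forall>k \<in> set ns. k > 0" "sum_list ns = n"
      "\<forall>i \<in> {1..m}. block_diag_sizes ns (transpose_mat P * A i * P)" by blast
    show False using dir2[OF sym H] R by blast
  qed
qed

end
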